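(* Let $c_0>0$, $T>0$, and let $(\hat u,\hat v)$ be a smooth solution of the NLDE on $\mathbb{R}\times[0,T]$ with $\mathcal{M}_0,\mathcal{M}<\infty$. There exist constants $\hat C_2,\hat C_3>0$, depending only on $c_0,\mathcal{M}_0,\mathcal{M},m,\alpha,\beta$, such that for every $\tau\in(0,1)$, every time-splitting solution with mesh $\tau$ whose initial data satisfy $\sum_j(|u_j^0|^2+|v_j^0|^2)\tau\le c_0$, all $j\in\mathbb{Z}$, all integers $n\ge0$ with $(n+1)\tau\le T$, and all $s\in[0,\tau]$, $$\tilde{\mathcal{L}}_j^n(s)+\tilde{\mathcal{D}}_j^n(s)\le\hat C_2\big(\tilde{\mathcal{L}}_j^n(0)+\tilde{\mathcal{D}}_j^n(0)\big)+\hat C_3\mathcal{M}^2\tau.$$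
   Context: Fix constants $m\ge 0$ and $\alpha,\beta\in\mathbb{R}$. The NLDE for $(u,v):\mathbb{R}\times[0,T]\to\mathbb{C}^2$ is $u_t+u_x=imv+i\alpha u|v|^2+2i\beta(\bar u v+u\bar v)v$, $v_t-v_x=imu+i\alpha v|u|^2+2i\beta(\bar u v+u\bar v)u$. Let (N) denote the ODE system on $\mathbb{C}^2$: $\frac{du}{ds}=imv+i\alpha u|v|^2+2i\beta(\bar u v+u\bar v)v$, $\frac{dv}{ds}=imu+i\alpha v|u|^2+2i\beta(\bar u v+u\bar v)u$. Time-splitting scheme with mesh $\tau>0$: given $(u_j^0,v_j^0)_{j\in\mathbb{Z}}\subset\mathbb{C}^2$ with $\sum_j(|u_j^0|^2+|v_j^0|^2)<\infty$, set $(u^{(\tau)},v^{(\tau)})(x,0)=(u_j^0,v_j^0)$ for $x\in[j\tau,(j+1)\tau)$. Inductively, once $(u^{(\tau)},v^{(\tau)})(\cdot,n\tau)$ is defined, set for $t\in[n\tau,(n+1)\tau)$: $u^{(\tau)}(x,t)=u^{(\tau)}(x-(t-n\tau),n\tau)$, $v^{(\tau)}(x,t)=v^{(\tau)}(x+(t-n\tau),n\tau)$; let $(u^{(\tau)},v^{(\tau)})(x,(n+1)\tau-)$ be the left limit in $t$; and for each $x$ define $(u^{(\tau)},v^{(\tau)})(x,(n+1)\tau)$ as the value at $s=\tau$ of the solution of (N) with value $(u^{(\tau)},v^{(\tau)})(x,(n+1)\tau-)$ at $s=0$ (this is globally well defined). Notation: $(u_j^n,v_j^n)=(u^{(\tau)},v^{(\tau)})(j\tau,n\tau)$,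 $(u_j^{n+1-},v_j^{n+1-})=(u^{(\tau)},v^{(\tau)})(j\tau,(n+1)\tau-)$; $(u_j^{n,2}(s),v_j^{n,2}(s))$, $s\in[0,\tau]$, is the solution of (N) with initial value $(u_j^{n+1-},v_j^{n+1-})$. Comparison quantities: $\mathcal{M}_0=\max_{\mathbb{R}\times[0,T]}(|\hat u|+|\hat v|+1)$, $\mathcal{M}=\max_{\mathbb{R}\times[0,T]}(|\hat u_t|+|\hat u_x|+|\hat v_t|+|\hat v_x|+1)$. For $s\in[0,\tau]$: $\mathcal{U}_j^n(s)=\hat u(j\tau+s,n\tau+s)-u_{j+1}^{n,2}(s)$, $\mathcal{V}_{j+2}^n(s)=\hat v((j+2)\tau-s,n\tau+s)-v_{j+1}^{n,2}(s)$, $\tilde{\mathcal{L}}_j^n(s)=|\mathcal{U}_j^n(s)|^2+|\mathcal{V}_{j+2}^n(s)|^2$, $\tilde{\mathcal{D}}_j^n(s)=|\mathcal{U}_j^n(s)|^2|v_{j+1}^{n,2}(s)|^2+|\mathcal{V}_{j+2}^n(s)|^2|u_{j+1}^{n,2}(s)|^2$. *)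

theory Defs
  imports "HOL-Analysis.Analysis"
begin

text \<open>Points of the (x,t)-plane are pairs (x,t). Partial derivatives of a function
  on a set S, taken as the Frechet derivative within S applied to the unit directions.\<close>

definition pdx :: "(real \<times> real \<Rightarrow> complex) \<Rightarrow> (real \<times> real) set \<Rightarrow> real \<times> real \<Rightarrow> complex" where
  "pdx f S p = frechet_derivative f (at p within S) (1, 0)"

definition pdt :: "(real \<times> real \<Rightarrow> complex) \<Rightarrow> (real \<times> real) set \<Rightarrow> real \<times> real \<Rightarrow> complex" where
  "pdt f S p = frechet_derivative f (at p within S) (0, 1)"

coinductive smooth_on_set :: "(real \<times> real) set \<Rightarrow> (real \<times> real \<Rightarrow> complex) \<Rightarrow> bool" where
  "\<lbrakk> \<forall>p\<in>S. f differentiable (at p within S);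
     smooth_on_set S (pdx f S); smooth_on_set S (pdt f S) \<rbrakk> \<Longrightarrow> smooth_on_set S f"

definition NF1 :: "real \<Rightarrow> real \<Rightarrow> real \<Rightarrow> complex \<Rightarrow> complex \<Rightarrow> complex" where
  "NF1 m \<alpha> \<beta> u v = \<i> * of_real m * v + \<i> * of_real \<alpha> * u * of_real ((cmod v)\<^sup>2)
      + 2 * \<i> * of_real \<beta> * (cnj u * v + u * cnj v) * v"

definition NF2 :: "real \<Rightarrow> real \<Rightarrow> real \<Rightarrow> complex \<Rightarrow> complex \<Rightarrow> complex" where
  "NF2 m \<alpha> \<beta> u v = \<i> * of_real m * u + \<i> * of_real \<alpha> * v * of_real ((cmod u)\<^sup>2)
      + 2 * \<i> * of_real \<beta> * (cnj u * v + u * cnj v) * u"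

definition NF :: "real \<Rightarrow> real \<Rightarrow> real \<Rightarrow> complex \<times> complex \<Rightarrow> complex \<times> complex" where
  "NF m \<alpha> \<beta> w = (NF1 m \<alpha> \<beta> (fst w) (snd w), NF2 m \<alpha> \<beta> (fst w) (snd w))"

definition NLDE_smooth_solution ::
  "real \<Rightarrow> real \<Rightarrow> real \<Rightarrow> real \<Rightarrow> (real \<times> real \<Rightarrow> complex) \<Rightarrow> (real \<times> real \<Rightarrow> complex) \<Rightarrow> bool" where
  "NLDE_smooth_solution m \<alpha> \<beta> T uh vh \<longleftrightarrow>
     (let S = (UNIV :: real set) \<times> {0..T} in
       smooth_on_set S uh \<and> smooth_on_set S vh \<and>
       (\<forall>p\<in>S. pdt uh S p + pdx uh S p = NF1 m \<alpha> \<beta> (uh p) (vh p)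
             \<and> pdt vh S p - pdx vh S p = NF2 m \<alpha> \<beta> (uh p) (vh p)))"

definition N_solution :: "real \<Rightarrow> real \<Rightarrow> real \<Rightarrow> real \<Rightarrow> complex \<times> complex \<Rightarrow> (real \<Rightarrow> complex \<times> complex) \<Rightarrow> bool" where
  "N_solution m \<alpha> \<beta> \<tau> w0 w \<longleftrightarrow> w 0 = w0 \<and>
     (\<forall>s\<in>{0..\<tau>}. (w has_vector_derivative NF m \<alpha> \<beta> (w s)) (at s within {0..\<tau>}))"

text \<open>Grid values of the time-splitting scheme with mesh tau:
  U j n = u_j^n, V j n = v_j^n, and W j n s = (u_j^{n,2}(s), v_j^{n,2}(s)).
  Transport over one time step shifts the cell-wise constant data by exactly one cell, so
  (u_j^{n+1-}, v_j^{n+1-}) = (u_{j-1}^n, v_{j+1}^n).\<close>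

definition splitting_scheme ::
  "real \<Rightarrow> real \<Rightarrow> real \<Rightarrow> real \<Rightarrow> (int \<Rightarrow> nat \<Rightarrow> complex) \<Rightarrow> (int \<Rightarrow> nat \<Rightarrow> complex)
     \<Rightarrow> (int \<Rightarrow> nat \<Rightarrow> real \<Rightarrow> complex \<times> complex) \<Rightarrow> bool" where
  "splitting_scheme m \<alpha> \<beta> \<tau> U V W \<longleftrightarrow>
     (\<forall>j n. N_solution m \<alpha> \<beta> \<tau> (U (j - 1) n, V (j + 1) n) (W j n)
        \<and> U j (Suc n) = fst (W j n \<tau>) \<and> V j (Suc n) = snd (W j n \<tau>))"

end

theory Submission
  imports Defs
begin

lemma cons_id: "Re (cnj u * NF1 m a b u v + cnj v * NF2 m a b u v) = 0"
  unfolding NF1_def NF2_def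
  by (simp add: cmod_power2 algebra_simps)
lemma NF2_sym: "NF2 m a b u v = NF1 m a b v u"
  unfolding NF1_def NF2_def by (simp add: algebra_simps)
lemma NF1_diff_id:
  fixes u v A B d :: complex
  shows "NF1 m a b (u + A) (v + B + d) - NF1 m a b u v =
     \<i> * of_real m * (B + d)
   + \<i> * of_real a * (A * ((v + B + d) * cnj (v + B + d)) + u * cnj (v + B + d) * (B + d) + u * v * cnj (B + d))
   + 2 * \<i> * of_real b * ((cnj (u + A) * (v + B + d) + (u + A) * cnj (v + B + d)) * (B + d)
        + ((cnj A * (v + B + d) + cnj u * (B + d)) + cnj (cnj A * (v + B + d) + cnj u * (B + d))) * v)"
  unfolding NF1_def complex_norm_square by (simp add: algebra_simps)
lemma Hfacts: fixes M0 r H :: real assumes M0: "0 \<le> M0" and r0: "0 \<le> r" and H_def: "H = (1+M0)*(1+r)"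
  shows "M0 \<le> H^2" "M0^2 \<le> H^2" "r \<le> H^2" "r^2 \<le> H^2" "M0*r \<le> H^2" "M0 + r \<le> H^2"
     "M0^2 + r^2 \<le> H^2" "M0*r + r^2 \<le> H^2" "M0^2*r \<le> H^2" "H^2 \<le> H^3" "1 \<le> H^2" "r \<le> H^3"
     "M0*r^2 + r^3 \<le> H^3" "M0^2*r + r^3 \<le> H^3" "M0^2 + r^2 \<le> H^3" "M0*r+r^2 \<le> H^3" "1 \<le> H"
proof -
  have p: "0 \<le> M0*r" "0 \<le> M0^2" "0 \<le> r^2" "0 \<le> M0^2*r" "0\<le>M0*r^2" "0 \<le> M0^2*r^2" "0 \<le> r^3" "0\<le>M0^3"
     "0 \<le> M0^3*r" "0 \<le> M0*r^3" "0 \<le> M0^2*r^3" "0 \<le> M0^3*r^2" "0 \<le> M0^3*r^3"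
    using M0 r0 by simp_all
  have e2: "H^2 = 1 + 2*M0 + M0^2 + 2*r + 4*M0*r + 2*M0^2*r + r^2 + 2*M0*r^2 + M0^2*r^2"
    unfolding H_def by algebra
  have e3: "H^3 = (1+M0)^3*(1+r)^3" unfolding H_def by algebra
  have e3': "(1+M0)^3*(1+r)^3 = (1 + 3*M0 + 3*M0^2 + M0^3)*(1+3*r+3*r^2+r^3)" by algebra
  have H1: "1 \<le> H" unfolding H_def using M0 r0 by (simp add: algebra_simps)
  then have HH: "H^2 \<le> H^3" by (simp add: power_increasing)
  show "M0 \<le> H^2" "M0^2 \<le> H^2" "r \<le> H^2" "r^2 \<le> H^2" "M0*r \<le> H^2" "M0 + r \<le> H^2"
     "M0^2 + r^2 \<le> H^2" "M0*r + r^2 \<le> H^2" "M0^2*r \<le> H^2" "1 \<le> H^2" "1 \<le> H" "H^2 \<le> H^3"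
    using p M0 r0 e2 H1 HH by linarith+
  show "r \<le> H^3" "M0^2 + r^2 \<le> H^3" "M0*r+r^2 \<le> H^3"
    using p M0 r0 e2 HH by linarith+
  show "M0*r^2 + r^3 \<le> H^3" "M0^2*r + r^3 \<le> H^3"
    unfolding e3 e3' using p M0 r0 by (simp_all add: algebra_simps power2_eq_square power3_eq_cube)
qed

lemma hb: "0 \<le> (x::real) \<Longrightarrow> x \<le> S \<Longrightarrow> 0 \<le> c \<Longrightarrow> c \<le> C \<Longrightarrow> x * c \<le> C * S"
  by (metis mult.commute mult_mono order_trans)

lemma T_bounds:
  fixes u v A B d :: complex and M0 r :: real
  assumes p: "cmod (u + A) \<le> M0" and q: "cmod (v + B + d) \<le> M0"
    and uu: "cmod u \<le> r" and vv: "cmod v \<le> r"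
  defines "S \<equiv> cmod A + cmod B + cmod A * cmod v + cmod B * cmod u"
    and "H \<equiv> (1 + M0) * (1 + r)"
  shows "cmod (B + d) \<le> H^2 * S + H^3 * cmod d"
    and "cmod ((B + d) * v) \<le> H^2 * S + H^3 * cmod d"
    and "cmod (A * ((v + B + d) * cnj (v + B + d)) + u * cnj (v + B + d) * (B + d) + u * v * cnj (B + d)) \<le> H^2 * S + H^3 * cmod d"
    and "cmod ((A * ((v + B + d) * cnj (v + B + d)) + u * cnj (v + B + d) * (B + d) + u * v * cnj (B + d)) * v) \<le> H^2 * S + H^3 * cmod d"
    and "cmod ((cnj (u + A) * (v + B + d) + (u + A) * cnj (v + B + d)) * (B + d)
        + ((cnj A * (v + B + d) + cnj u * (B + d)) + cnj (cnj A * (v + B + d) + cnj u * (B + d))) * v) \<le> 2*(H^2 * S + H^3 * cmod d)"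
    and "cmod (((cnj (u + A) * (v + B + d) + (u + A) * cnj (v + B + d)) * (B + d)
        + ((cnj A * (v + B + d) + cnj u * (B + d)) + cnj (cnj A * (v + B + d) + cnj u * (B + d))) * v) * v) \<le> 2*(H^2 * S + H^3 * cmod d)"
proof -
  define a where "a = cmod A"
  define bb where "bb = cmod B"
  define dd where "dd = cmod d"
  define nu where "nu = cmod u"
  define nv where "nv = cmod v"
  define np where "np = cmod (u + A)"
  define nq where "nq = cmod (v + B + d)"
  have nn: "0 \<le> a" "0 \<le> bb" "0 \<le> dd" "0 \<le> nu" "0 \<le> nv" "0 \<le> np" "0 \<le> nq"
    by (simp_all add: a_def bb_def dd_def nu_def nv_def np_def nq_def)
  have M0: "0 \<le> M0" using p by (meson norm_ge_zero order_trans)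
  have r0: "0 \<le> r" using uu by (meson norm_ge_zero order_trans)
  note HF = Hfacts[OF M0 r0 H_def[THEN meta_eq_to_obj_eq]]
  have SS: "S = a + bb + a*nv + bb*nu" by (simp add: S_def a_def bb_def nv_def nu_def)
  have pq: "np \<le> M0" "nq \<le> M0" "nu \<le> r" "nv \<le> r" using p q uu vv by (simp_all add: np_def nq_def nu_def nv_def)
  have Bd: "cmod (B + d) \<le> bb + dd" by (simp add: bb_def dd_def norm_triangle_ineq)
  have cBd: "cmod (cnj (B + d)) \<le> bb + dd" using Bd by (simp only: complex_mod_cnj)
  have Sge: "bb \<le> S" "a \<le> S" "a*nv \<le> S" "bb*nu \<le> S" "a + bb*nu \<le> S" "bb + a*nv + bb*nu \<le> S" "a*nv + bb*nu \<le> S"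
    using nn SS by (simp_all add: mult_nonneg_nonneg)
  have nn2: "0 \<le> a*nv" "0 \<le> bb*nu" "0 \<le> a + bb*nu" "0 \<le> bb + a*nv + bb*nu" "0 \<le> a*nv + bb*nu"
    using nn by simp_all
  have H2S: "0 \<le> H^2" "0 \<le> H^3" using HF by linarith+
  have m0r: "0 \<le> M0*r" "0 \<le> M0^2" "0 \<le> r^2" "0 \<le> M0^2*r" "0 \<le> M0*r^2" "0 \<le> r^3" using M0 r0 by simp_all
  have ddH: "c \<le> H^3 \<Longrightarrow> 0 \<le> c \<Longrightarrow> dd * c \<le> H^3 * dd" for c using hb[of dd dd c "H^3"] nn by simp
  show "cmod (B + d) \<le> H^2 * S + H^3 * cmod d"
  proof -
    have "bb * 1 \<le> H^2 * S" using Sge HF nn by (intro hb) auto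
    moreover have "dd * 1 \<le> H^3 * dd" using HF by (intro ddH) auto
    ultimately show ?thesis using Bd unfolding dd_def[symmetric] by linarith
  qed
  show "cmod ((B + d) * v) \<le> H^2 * S + H^3 * cmod d"
  proof -
    have "cmod ((B + d) * v) \<le> (bb + dd) * r" unfolding norm_mult
      using Bd pq nn by (intro mult_mono) (auto simp: nv_def)
    moreover have "bb * r \<le> H^2 * S" using Sge HF nn r0 by (intro hb) auto
    moreover have "dd * r \<le> H^3 * dd" using HF r0 by (intro ddH) auto
    ultimately show ?thesis unfolding dd_def[symmetric] by (simp add: algebra_simps)
  qed
  have nq2: "nq * nq \<le> M0^2" using pq nn by (simp add: power2_eq_square mult_mono)
  have T2: "cmod (A * ((v + B + d) * cnj (v + B + d)) + u * cnj (v + B + d) * (B + d) + u * v * cnj (B + d))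
     \<le> a * (nq*nq) + nq * (bb*nu) + nq*nu*dd + nu*nv*(bb+dd)"
  proof -
    have "cmod (A * ((v + B + d) * cnj (v + B + d))) = a * (nq*nq)" unfolding norm_mult complex_mod_cnj a_def nq_def by simp
    moreover have "cmod (u * cnj (v + B + d) * (B + d)) \<le> nu * nq * (bb + dd)"
      unfolding norm_mult complex_mod_cnj using Bd nn by (simp add: nu_def nq_def mult_left_mono)
    moreover have "cmod (u * v * cnj (B + d)) \<le> nu * nv * (bb+dd)"
      unfolding norm_mult using cBd nn by (simp add: nu_def nv_def mult_left_mono)
    ultimately show ?thesis by (smt (verit, best) norm_triangle_ineq distrib_left mult.commute mult.left_commute)
  qed
  have f1: "a * (nq*nq) \<le> H^2 * a" using HF nq2 nn by (intro hb) auto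
  have f2: "nq * (bb*nu) \<le> M0 * (bb*nu)" using pq nn by (simp add: mult_right_mono)
  have f3: "nu*nv*(bb+dd) = nv * (bb*nu) + nu*nv*dd" by (simp add: algebra_simps)
  have f4: "nv * (bb*nu) \<le> r * (bb*nu)" using pq nn by (simp add: mult_right_mono)
  have f5: "M0 * (bb*nu) + r * (bb*nu) \<le> H^2 * (bb*nu)"
    using HF nn by (metis distrib_right mult_right_mono mult_nonneg_nonneg)
  have f6: "nq*nu*dd \<le> M0*r*dd" using pq nn by (simp add: mult_mono)
  have f7: "nu*nv*dd \<le> r*r*dd" using pq nn by (simp add: mult_mono)
  have f8: "M0*r*dd + r*r*dd \<le> H^3 * dd" using HF nn
    by (metis distrib_right mult_right_mono power2_eq_square)
  have f9: "H^2 * a + H^2 * (bb*nu) \<le> H^2 * S" using Sge H2S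
    by (metis distrib_left mult_left_mono)
  show "cmod (A * ((v + B + d) * cnj (v + B + d)) + u * cnj (v + B + d) * (B + d) + u * v * cnj (B + d)) \<le> H^2 * S + H^3 * cmod d"
    unfolding dd_def[symmetric] using T2 f1 f2 f3 f4 f5 f6 f7 f8 f9 by linarith
  show "cmod ((A * ((v + B + d) * cnj (v + B + d)) + u * cnj (v + B + d) * (B + d) + u * v * cnj (B + d)) * v) \<le> H^2 * S + H^3 * cmod d"
  proof -
    have "cmod ((A * ((v + B + d) * cnj (v + B + d)) + u * cnj (v + B + d) * (B + d) + u * v * cnj (B + d)) * v)
       \<le> (a * (nq*nq) + nq * (bb*nu) + nq*nu*dd + nu*nv*(bb+dd)) * nv"
      unfolding norm_mult using T2 nn by (simp add: nv_def mult_right_mono)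
    also have "\<dots> = (a*nv)*(nq*nq) + (bb*nu)*(nq*nv) + dd*(nq*nu*nv) + (bb*nu)*(nv*nv) + dd*(nu*nv*nv)"
      by (simp add: algebra_simps)
    also have "\<dots> \<le> (a*nv)*(H^2) + (bb*nu)*(M0*r) + dd*(M0*r*r) + (bb*nu)*(r*r) + dd*(r*r*r)"
    proof -
      have "nq*nq \<le> H^2" using nq2 HF by linarith
      moreover have "nq*nv \<le> M0*r" "nq*nu*nv \<le> M0*r*r" "nv*nv \<le> r*r" "nu*nv*nv \<le> r*r*r"
        using pq nn by (simp_all add: mult_mono mult_nonneg_nonneg)
      ultimately show ?thesis using nn nn2
        by (smt (verit) mult_left_mono)
    qed
    also have "\<dots> \<le> H^2 * (a*nv + bb*nu) + H^3 * dd"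
    proof -
      have "(bb*nu)*(M0*r) + (bb*nu)*(r*r) \<le> (bb*nu) * H^2"
        using HF nn2 by (metis distrib_left mult_left_mono power2_eq_square)
      moreover have "dd*(M0*r*r) + dd*(r*r*r) \<le> dd * H^3"
        using HF nn by (metis distrib_left mult_left_mono power2_eq_square power3_eq_cube mult.assoc)
      ultimately show ?thesis by (simp add: algebra_simps)
    qed
    also have "\<dots> \<le> H^2 * S + H^3 * dd" using Sge H2S by (simp add: mult_left_mono)
    finally show ?thesis unfolding dd_def by simp
  qed
  define w where "w = cnj A * (v + B + d) + cnj u * (B + d)"
  have wb: "cmod w \<le> a*nq + nu*bb + nu*dd"
  proof -
    have "cmod w \<le> cmod (cnj A * (v + B + d)) + cmod (cnj u * (B + d))" unfolding w_def by (rule norm_triangle_ineq)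
    moreover have "cmod (cnj A * (v + B + d)) = a*nq" unfolding norm_mult complex_mod_cnj a_def nq_def ..
    moreover have "cmod (cnj u * (B + d)) \<le> nu*(bb+dd)" unfolding norm_mult complex_mod_cnj
      using Bd nn by (simp add: nu_def mult_left_mono)
    ultimately show ?thesis by (simp add: algebra_simps)
  qed
  have wcw: "cmod (w + cnj w) \<le> 2 * cmod w"
    using norm_triangle_ineq[of w "cnj w"] by (simp only: complex_mod_cnj)
  have Rb: "cmod (cnj (u + A) * (v + B + d) + (u + A) * cnj (v + B + d)) \<le> 2 * (M0*M0)"
  proof -
    have "cmod (cnj (u + A) * (v + B + d) + (u + A) * cnj (v + B + d)) \<le> np*nq + np*nq"
      using norm_triangle_ineq[of "cnj (u + A) * (v + B + d)" "(u + A) * cnj (v + B + d)"]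
      unfolding norm_mult complex_mod_cnj np_def nq_def by simp
    moreover have "np*nq \<le> M0*M0" using pq nn by (simp add: mult_mono)
    ultimately show ?thesis by linarith
  qed
  have T3: "cmod ((cnj (u + A) * (v + B + d) + (u + A) * cnj (v + B + d)) * (B + d) + (w + cnj w) * v)
     \<le> 2*(M0*M0)*(bb+dd) + 2*(a*nq + nu*bb + nu*dd)*nv"
  proof -
    have "cmod ((cnj (u + A) * (v + B + d) + (u + A) * cnj (v + B + d)) * (B + d)) \<le> 2*(M0*M0)*(bb+dd)"
      unfolding norm_mult using Rb Bd nn by (intro mult_mono) auto
    moreover have "cmod ((w + cnj w) * v) \<le> 2*(a*nq + nu*bb + nu*dd)*nv"
      unfolding norm_mult using wcw wb nn by (simp add: nv_def mult_right_mono)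
    ultimately show ?thesis by (smt (verit) norm_triangle_ineq)
  qed
  show "cmod ((cnj (u + A) * (v + B + d) + (u + A) * cnj (v + B + d)) * (B + d)
        + ((cnj A * (v + B + d) + cnj u * (B + d)) + cnj (cnj A * (v + B + d) + cnj u * (B + d))) * v) \<le> 2*(H^2 * S + H^3 * cmod d)"
  proof -
    have "2*(M0*M0)*(bb+dd) + 2*(a*nq + nu*bb + nu*dd)*nv
       = 2*(bb*(M0*M0) + (a*nv)*nq + (bb*nu)*nv + dd*(M0*M0) + dd*(nu*nv))" by (simp add: algebra_simps)
    also have "\<dots> \<le> 2*(bb*(H^2) + (a*nv)*(H^2) + (bb*nu)*(H^2) + dd*(M0*M0) + dd*(r*r))"
    proof -
      have "M0*M0 \<le> H^2" "nq \<le> H^2" "nv \<le> H^2" "nu*nv \<le> r*r" using HF pq nn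
        by (simp_all add: power2_eq_square mult_mono)
      then show ?thesis using nn nn2 by (smt (verit) mult_left_mono)
    qed
    also have "\<dots> \<le> 2*(H^2 * S + H^3 * dd)"
    proof -
      have "dd*(M0*M0) + dd*(r*r) \<le> dd*H^3" using HF nn
        by (metis distrib_left mult_left_mono power2_eq_square)
      moreover have "bb*(H^2) + (a*nv)*(H^2) + (bb*nu)*(H^2) \<le> H^2 * S"
        using Sge(6) H2S by (metis distrib_right mult.commute mult_left_mono)
      ultimately show ?thesis by (simp add: algebra_simps)
    qed
    finally show ?thesis using T3 unfolding w_def dd_def by simp
  qed
  show "cmod (((cnj (u + A) * (v + B + d) + (u + A) * cnj (v + B + d)) * (B + d)
        + ((cnj A * (v + B + d) + cnj u * (B + d)) + cnj (cnj A * (v + B + d) + cnj u * (B + d))) * v) * v) \<le> 2*(H^2 * S + H^3 * cmod d)"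
  proof -
    have "cmod (((cnj (u + A) * (v + B + d) + (u + A) * cnj (v + B + d)) * (B + d) + (w + cnj w) * v) * v)
      \<le> (2*(M0*M0)*(bb+dd) + 2*(a*nq + nu*bb + nu*dd)*nv) * nv"
      unfolding norm_mult[of _ v] using T3 nn by (simp add: nv_def mult_right_mono)
    also have "\<dots> = 2*(bb*(M0*M0*nv) + (a*nv)*(nq*nv) + (bb*nu)*(nv*nv) + dd*(M0*M0*nv) + dd*(nu*nv*nv))"
      by (simp add: algebra_simps)
    also have "\<dots> \<le> 2*(bb*(H^2) + (a*nv)*(H^2) + (bb*nu)*(H^2) + dd*(M0*M0*r) + dd*(r*r*r))"
    proof -
      have "M0*M0*nv \<le> H^2" using HF pq nn M0
        by (smt (verit) mult_left_mono mult_nonneg_nonneg power2_eq_square)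
      moreover have "nq*nv \<le> H^2" using HF pq nn M0 r0
        by (smt (verit) mult_mono)
      moreover have "nv*nv \<le> H^2" using HF pq nn r0 by (smt (verit) mult_mono power2_eq_square)
      moreover have "M0*M0*nv \<le> M0*M0*r" "nu*nv*nv \<le> r*r*r" using pq nn M0
        by (simp_all add: mult_mono mult_left_mono)
      ultimately show ?thesis using nn nn2 by (smt (verit) mult_left_mono)
    qed
    also have "\<dots> \<le> 2*(H^2 * S + H^3 * dd)"
    proof -
      have "dd*(M0*M0*r) + dd*(r*r*r) \<le> dd*H^3" using HF nn
        by (metis distrib_left mult_left_mono power2_eq_square power3_eq_cube mult.assoc)
      moreover have "bb*(H^2) + (a*nv)*(H^2) + (bb*nu)*(H^2) \<le> H^2 * S"
        using Sge(6) H2S by (metis distrib_right mult.commute mult_left_mono)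
      ultimately show ?thesis by (simp add: algebra_simps)
    qed
    finally show ?thesis unfolding w_def dd_def by simp
  qed
qed

lemma NF_bounds:
  fixes u v p q d :: complex and M0 r m a b :: real
  assumes m0: "0 \<le> m" and p: "cmod p \<le> M0" and q: "cmod q \<le> M0"
    and uu: "cmod u \<le> r" and vv: "cmod v \<le> r"
  defines "A \<equiv> p - u" and "B \<equiv> q - v - d"
  defines "S \<equiv> cmod A + cmod B + cmod A * cmod v + cmod B * cmod u"
    and "H \<equiv> (1 + M0) * (1 + r)" and "K \<equiv> 8 * (m + \<bar>a\<bar> + \<bar>b\<bar> + 1)"
  shows "cmod (NF1 m a b p q - NF1 m a b u v) \<le> K * (H^2 * S + H^3 * cmod d)"
    and "cmod ((NF1 m a b p q - NF1 m a b u v) * v) \<le> K * (H^2 * S + H^3 * cmod d)"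
    and "cmod (A * NF2 m a b u v) \<le> K * (H^2 * S)"
proof -
  have pe: "p = u + A" and qe: "q = v + B + d" by (simp_all add: A_def B_def)
  have p': "cmod (u + A) \<le> M0" and q': "cmod (v + B + d) \<le> M0" using p q pe qe by simp_all
  note TB = T_bounds[OF p' q' uu vv, folded S_def H_def]
  define X where "X = H^2 * S + H^3 * cmod d"
  have X0: "0 \<le> X" using TB(1) unfolding X_def by (meson norm_ge_zero order_trans)
  have KX: "(m + \<bar>a\<bar> + 2*\<bar>b\<bar>*2) * X \<le> K * X" unfolding K_def using X0 m0
    by (intro mult_right_mono) auto
  have id: "NF1 m a b p q - NF1 m a b u v = \<i> * of_real m * (B + d)
   + \<i> * of_real a * (A * ((v + B + d) * cnj (v + B + d)) + u * cnj (v + B + d) * (B + d) + u * v * cnj (B + d))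
   + 2 * \<i> * of_real b * ((cnj (u + A) * (v + B + d) + (u + A) * cnj (v + B + d)) * (B + d)
        + ((cnj A * (v + B + d) + cnj u * (B + d)) + cnj (cnj A * (v + B + d) + cnj u * (B + d))) * v)"
    unfolding pe qe by (rule NF1_diff_id)
  have tri: "cmod (\<i> * of_real m * x + \<i> * of_real a * y + 2 * \<i> * of_real b * z) \<le> m * cmod x + \<bar>a\<bar> * cmod y + 2*\<bar>b\<bar> * cmod z" for x y z
  proof -
    have "cmod (\<i> * of_real m * x + \<i> * of_real a * y + 2 * \<i> * of_real b * z)
       \<le> cmod (\<i> * of_real m * x) + cmod (\<i> * of_real a * y) + cmod (2 * \<i> * of_real b * z)"
      by (meson norm_triangle_ineq order_trans add_right_mono)
    also have "\<dots> = m * cmod x + \<bar>a\<bar> * cmod y + 2*\<bar>b\<bar> * cmod z"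
      unfolding norm_mult using m0 by simp
    finally show ?thesis .
  qed
  have comb: "cmod x \<le> X \<Longrightarrow> cmod y \<le> X \<Longrightarrow> cmod z \<le> 2*X \<Longrightarrow>
      cmod (\<i> * of_real m * x + \<i> * of_real a * y + 2 * \<i> * of_real b * z) \<le> K * X" for x y z
  proof -
    assume h: "cmod x \<le> X" "cmod y \<le> X" "cmod z \<le> 2*X"
    have "m * cmod x \<le> m * X" "\<bar>a\<bar> * cmod y \<le> \<bar>a\<bar> * X" "\<bar>b\<bar> * cmod z \<le> \<bar>b\<bar> * (2*X)"
      using h m0 by (simp_all only: mult_left_mono abs_ge_zero)
    then show ?thesis using tri[of x y z] KX by (simp add: algebra_simps)
  qed
  note comb' = comb[unfolded X_def]
  show "cmod (NF1 m a b p q - NF1 m a b u v) \<le> K * (H^2 * S + H^3 * cmod d)"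
    unfolding id by (rule comb'[OF TB(1,3,5)])
  have idv: "(NF1 m a b p q - NF1 m a b u v) * v = \<i> * of_real m * ((B + d) * v)
   + \<i> * of_real a * ((A * ((v + B + d) * cnj (v + B + d)) + u * cnj (v + B + d) * (B + d) + u * v * cnj (B + d)) * v)
   + 2 * \<i> * of_real b * (((cnj (u + A) * (v + B + d) + (u + A) * cnj (v + B + d)) * (B + d)
        + ((cnj A * (v + B + d) + cnj u * (B + d)) + cnj (cnj A * (v + B + d) + cnj u * (B + d))) * v) * v)"
    unfolding id by (simp only: distrib_right mult.assoc)
  show "cmod ((NF1 m a b p q - NF1 m a b u v) * v) \<le> K * (H^2 * S + H^3 * cmod d)"
    unfolding idv by (rule comb'[OF TB(2,4,6)])
  show "cmod (A * NF2 m a b u v) \<le> K * (H^2 * S)"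
  proof -
    define Y where "Y = H^2 * S"
    have S0: "0 \<le> S" unfolding S_def by simp
    have HF: "r \<le> H^2" "r^2 \<le> H^2" "0 \<le> r" 
      using Hfacts[OF _ _ H_def[THEN meta_eq_to_obj_eq]] p uu by (meson norm_ge_zero order_trans)+
    have Y0: "0 \<le> Y" unfolding Y_def using S0 by simp
    have KY: "(m + \<bar>a\<bar> + 2*\<bar>b\<bar>*2) * Y \<le> K * Y" unfolding K_def using Y0 m0
      by (intro mult_right_mono) auto
    have e: "A * NF2 m a b u v = \<i> * of_real m * (A * u) + \<i> * of_real a * (A * v * of_real ((cmod u)^2))
       + 2 * \<i> * of_real b * ((cnj u * v + u * cnj v) * u * A)"
      unfolding NF2_def by (simp add: algebra_simps)
    have Sa: "cmod A \<le> S" "cmod A * cmod v \<le> S" unfolding S_def by simp_all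
    have x: "cmod (A * u) \<le> Y"
    proof -
      have "cmod (A * u) \<le> cmod A * r" unfolding norm_mult using uu by (simp add: mult_left_mono)
      also have "\<dots> \<le> H^2 * S" using hb[OF _ Sa(1) HF(3) HF(1)] by simp
      finally show ?thesis unfolding Y_def .
    qed
    have y: "cmod (A * v * of_real ((cmod u)^2)) \<le> Y"
    proof -
      have "cmod (A * v * of_real ((cmod u)^2)) = (cmod A * cmod v) * (cmod u)^2" by (simp add: norm_mult norm_power)
      also have "\<dots> \<le> (cmod A * cmod v) * r^2" using uu by (simp add: mult_left_mono power_mono)
      also have "\<dots> \<le> H^2 * S" using hb[OF _ Sa(2) _ HF(2)] by simp
      finally show ?thesis unfolding Y_def .
    qed
    have z: "cmod ((cnj u * v + u * cnj v) * u * A) \<le> 2 * Y"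
    proof -
      have "cmod (cnj u * v + u * cnj v) \<le> cmod u * cmod v + cmod u * cmod v"
        using norm_triangle_ineq[of "cnj u * v" "u * cnj v"] by (simp add: norm_mult)
      then have "cmod ((cnj u * v + u * cnj v) * u * A) \<le> (2 * (cmod u * cmod v)) * cmod u * cmod A"
        unfolding norm_mult by (simp add: mult_right_mono)
      also have "\<dots> = 2 * ((cmod A * cmod v) * (cmod u)^2)" by (simp add: algebra_simps power2_eq_square)
      also have "\<dots> \<le> 2 * ((cmod A * cmod v) * r^2)" using uu by (simp add: mult_left_mono power_mono)
      also have "\<dots> \<le> 2 * (H^2 * S)" using hb[OF _ Sa(2) _ HF(2)] by simp
      finally show ?thesis unfolding Y_def .
    qed
    have "m * cmod (A * u) \<le> m * Y" "\<bar>a\<bar> * cmod (A * v * of_real ((cmod u)^2)) \<le> \<bar>a\<bar> * Y"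
       "\<bar>b\<bar> * cmod ((cnj u * v + u * cnj v) * u * A) \<le> \<bar>b\<bar> * (2*Y)"
      using x y z m0 by (simp_all only: mult_left_mono abs_ge_zero)
    then show ?thesis unfolding e Y_def[symmetric]
      using tri[of "A * u" "A * v * of_real ((cmod u)^2)" "(cnj u * v + u * cnj v) * u * A"] KY
      by (simp add: algebra_simps)
  qed
qed

lemma NF_bounds2:
  fixes u v p q d A B :: complex and M0 r m a b Sv H K0 :: real
  assumes m0: "0 \<le> m" and p: "cmod p \<le> M0" and q: "cmod q \<le> M0"
    and uu: "cmod u \<le> r" and vv: "cmod v \<le> r"
    and Ae: "A = p - u" and Be: "B = q - v - d"
    and Se: "Sv = cmod A + cmod B + cmod A * cmod v + cmod B * cmod u"
    and He: "H = (1 + M0) * (1 + r)" and Ke: "K0 = 8 * (m + \<bar>a\<bar> + \<bar>b\<bar> + 1)"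
  shows "cmod (NF1 m a b p q - NF1 m a b u v) \<le> K0 * (H^2 * Sv + H^3 * cmod d)"
    and "cmod ((NF1 m a b p q - NF1 m a b u v) * v) \<le> K0 * (H^2 * Sv + H^3 * cmod d)"
    and "cmod (A * NF2 m a b u v) \<le> K0 * (H^2 * Sv)"
  using NF_bounds[OF m0 p q uu vv, of a b d] unfolding Ae Be Se He Ke by auto

lemma cmod2_deriv:
  assumes "(X has_vector_derivative X') (at x within S)"
  shows "((\<lambda>s. (cmod (X s))^2) has_real_derivative (2 * Re (cnj (X x) * X'))) (at x within S)"
proof -
  have "((\<lambda>s. (Re (X s))^2 + (Im (X s))^2) has_real_derivative
     (2 * Re (X x) * Re X' + 2 * Im (X x) * Im X')) (at x within S)"
    using assms by (auto intro!: derivative_eq_intros)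
  then show ?thesis by (simp add: cmod_power2 algebra_simps)
qed

lemma gronwall_lin:
  fixes E E' :: "real \<Rightarrow> real"
  assumes tau: "0 < \<tau>"
    and D: "\<And>s. s \<in> {0..\<tau>} \<Longrightarrow> (E has_real_derivative E' s) (at s within {0..\<tau>})"
    and B: "\<And>s. s \<in> {0..\<tau>} \<Longrightarrow> E' s \<le> \<kappa> * E s + \<sigma>"
    and k: "0 \<le> \<kappa>" and sg: "0 \<le> \<sigma>" and E0: "0 \<le> E 0" and s: "s \<in> {0..\<tau>}"
  shows "E s \<le> exp (\<kappa> * \<tau>) * (E 0 + \<sigma> * \<tau>)"
proof -
  define g where "g t = \<sigma> * t - exp (- \<kappa> * t) * E t" for t
  have gd: "(g has_real_derivative (\<sigma> - (exp (- \<kappa> * t) * E' t + (- \<kappa>) * exp (- \<kappa> * t) * E t))) (at t within {0..\<tau>})"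
    if "t \<in> {0..\<tau>}" for t
    unfolding g_def using D[OF that]
    by (auto intro!: derivative_eq_intros simp: algebra_simps)
  have gnn: "0 \<le> \<sigma> - (exp (- \<kappa> * t) * E' t + (- \<kappa>) * exp (- \<kappa> * t) * E t)" if "t \<in> {0..\<tau>}" for t
  proof -
    have "exp (- \<kappa> * t) * E' t \<le> exp (- \<kappa> * t) * (\<kappa> * E t + \<sigma>)"
      using B[OF that] by (simp add: mult_left_mono)
    moreover have "exp (- \<kappa> * t) \<le> 1" using k that by simp
    moreover have "exp (- \<kappa> * t) * (\<kappa> * E t + \<sigma>) = \<kappa> * exp (- \<kappa> * t) * E t + exp (- \<kappa> * t) * \<sigma>"
      by (simp add: algebra_simps)
    ultimately have "exp (- \<kappa> * t) * E' t + (- \<kappa>) * exp (- \<kappa> * t) * E t \<le> exp (- \<kappa> * t) * \<sigma>"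
      by linarith
    also have "\<dots> \<le> \<sigma>" using \<open>exp (- \<kappa> * t) \<le> 1\<close> sg by (simp add: mult_left_le_one_le)
    finally show ?thesis by simp
  qed
  have cont: "continuous_on {0..\<tau>} g"
    using gd by (meson DERIV_continuous continuous_on_eq_continuous_within)
  have "g 0 \<le> g s"
  proof (rule DERIV_nonneg_imp_increasing_open[of 0 s g])
    show "0 \<le> s" using s by simp
    fix x assume x: "0 < x" "x < s"
    then have xi: "x \<in> {0..\<tau>}" using s by auto
    have "at x within {0..\<tau>} = at x" using x s by (intro at_within_Icc_at) auto
    then show "\<exists>y. (g has_real_derivative y) (at x) \<and> 0 \<le> y"
      using gd[OF xi] gnn[OF xi] by auto
  next
    show "continuous_on {0..s} g" using continuous_on_subset[OF cont] s by auto
  qed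
  then have "exp (- \<kappa> * s) * E s \<le> E 0 + \<sigma> * s" unfolding g_def by (simp add: algebra_simps)
  then have "E s \<le> exp (\<kappa> * s) * (E 0 + \<sigma> * s)"
    by (simp add: exp_minus field_simps)
  also have "\<dots> \<le> exp (\<kappa> * \<tau>) * (E 0 + \<sigma> * \<tau>)"
    using s k sg E0 by (intro mult_mono) (auto intro!: mult_left_mono mult_nonneg_nonneg)
  finally show ?thesis .
qed

lemma chain_curve:
  fixes f :: "real \<times> real \<Rightarrow> complex"
  assumes "f differentiable (at (g s) within S)" "(g has_vector_derivative g') (at s within I)" "g ` I \<subseteq> S"
  shows "((\<lambda>s. f (g s)) has_vector_derivative frechet_derivative f (at (g s) within S) g') (at s within I)"
proof -
  have "(f has_derivative frechet_derivative f (at (g s) within S)) (at (g s) within g ` I)"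
    using assms(1,3) frechet_derivative_works has_derivative_subset by blast
  from vector_derivative_diff_chain_within[OF assms(2) this] show ?thesis by (simp add: o_def)
qed

lemma MVT_x:
  fixes f :: "real \<times> real \<Rightarrow> complex"
  assumes D: "\<forall>p\<in>S. f differentiable (at p within S)" and Sdef: "S = UNIV \<times> {0..T}"
    and Bd: "\<forall>p\<in>S. cmod (pdx f S p) \<le> M" and t: "t \<in> {0..T}"
  shows "cmod (f (x, t) - f (y, t)) \<le> M * \<bar>x - y\<bar>"
proof -
  have d: "((\<lambda>z. f (z, t)) has_derivative (\<lambda>h. h *\<^sub>R pdx f S (z, t))) (at z within UNIV)" for z
  proof -
    have g: "((\<lambda>z. (z, t)) has_vector_derivative (1, 0)) (at z within UNIV)"
      by (auto intro!: derivative_eq_intros)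
    have "(\<lambda>z. (z, t)) ` UNIV \<subseteq> S" using Sdef t by auto
    from chain_curve[OF D[rule_format] g this] Sdef t
    show ?thesis unfolding has_vector_derivative_def pdx_def by auto
  qed
  have o: "onorm (\<lambda>h. h *\<^sub>R pdx f S (z, t)) \<le> M" for z
  proof -
    have "onorm (\<lambda>h::real. h *\<^sub>R pdx f S (z, t)) = onorm (\<lambda>h::real. h) * cmod (pdx f S (z, t))"
      using onorm_scaleR_left[of "\<lambda>h::real. h"] bounded_linear_ident by blast
    also have "\<dots> = cmod (pdx f S (z, t))" using onorm_id[where 'a=real] by (simp add: id_def)
    also have "\<dots> \<le> M" using Bd Sdef t by auto
    finally show ?thesis .
  qed
  from differentiable_bound[of UNIV "\<lambda>z. f (z, t)" "\<lambda>z h. h *\<^sub>R pdx f S (z, t)" M x y] d o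
  show ?thesis by auto
qed

lemma conservation:
  assumes "N_solution m a b \<tau> w0 w" "s \<in> {0..\<tau>}"
  shows "(cmod (fst (w s)))^2 + (cmod (snd (w s)))^2 = (cmod (fst w0))^2 + (cmod (snd w0))^2"
proof -
  have D: "(w has_vector_derivative NF m a b (w t)) (at t within {0..\<tau>})" if "t \<in> {0..\<tau>}" for t
    using assms(1) that unfolding N_solution_def by auto
  have "((\<lambda>t. (cmod (fst (w t)))^2 + (cmod (snd (w t)))^2) has_real_derivative 0) (at t within {0..\<tau>})"
    if "t \<in> {0..\<tau>}" for t
  proof -
    have f: "((\<lambda>t. fst (w t)) has_vector_derivative NF1 m a b (fst (w t)) (snd (w t))) (at t within {0..\<tau>})"
      using bounded_linear.has_vector_derivative[OF bounded_linear_fst D[OF that]] by (simp add: NF_def)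
    have g: "((\<lambda>t. snd (w t)) has_vector_derivative NF2 m a b (fst (w t)) (snd (w t))) (at t within {0..\<tau>})"
      using bounded_linear.has_vector_derivative[OF bounded_linear_snd D[OF that]] by (simp add: NF_def)
    have "((\<lambda>t. (cmod (fst (w t)))^2 + (cmod (snd (w t)))^2) has_real_derivative
       2 * Re (cnj (fst (w t)) * NF1 m a b (fst (w t)) (snd (w t))) + 2 * Re (cnj (snd (w t)) * NF2 m a b (fst (w t)) (snd (w t))))
       (at t within {0..\<tau>})"
      by (rule DERIV_add[OF cmod2_deriv[OF f] cmod2_deriv[OF g]])
    moreover have "2 * Re (cnj (fst (w t)) * NF1 m a b (fst (w t)) (snd (w t))) + 2 * Re (cnj (snd (w t)) * NF2 m a b (fst (w t)) (snd (w t))) = 0"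
      using cons_id[of "fst (w t)" m a b "snd (w t)"] by simp
    ultimately show ?thesis by simp
  qed
  then obtain c where c: "\<forall>t\<in>{0..\<tau>}. (cmod (fst (w t)))^2 + (cmod (snd (w t)))^2 = c"
    using has_field_derivative_zero_constant[of "{0..\<tau>}" "\<lambda>t. (cmod (fst (w t)))^2 + (cmod (snd (w t)))^2"]
    by auto
  have "0 \<in> {0..\<tau>}" using assms(2) by auto
  then have "(cmod (fst (w 0)))^2 + (cmod (snd (w 0)))^2 = c" using c by blast
  moreover have "w 0 = w0" using assms(1) unfolding N_solution_def by simp
  ultimately show ?thesis using c assms(2) by auto
qed

lemma single_le_infsum:
  fixes f :: "int \<Rightarrow> real"
  assumes "f summable_on UNIV" "\<And>x. 0 \<le> f x"
  shows "f j \<le> infsum f UNIV"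
  using finite_sum_le_infsum[of f UNIV "{j}"] assms by auto

lemma mass:
  assumes sch: "splitting_scheme m a b \<tau> U V W" and tau: "0 < \<tau>"
    and sm: "(\<lambda>j. (cmod (U j 0))^2 + (cmod (V j 0))^2) summable_on UNIV"
  shows "(\<lambda>j. (cmod (U j n))^2 + (cmod (V j n))^2) summable_on UNIV \<and>
     infsum (\<lambda>j. (cmod (U j n))^2 + (cmod (V j n))^2) UNIV = infsum (\<lambda>j. (cmod (U j 0))^2 + (cmod (V j 0))^2) UNIV"
proof (induction n)
  case 0
  then show ?case using sm by simp
next
  case (Suc n)
  define fu where "fu j = (cmod (U j n))^2" for j
  define fv where "fv j = (cmod (V j n))^2" for j
  have smn: "(\<lambda>j. fu j + fv j) summable_on UNIV" using Suc.IH by (simp add: fu_def fv_def)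
  have su: "fu summable_on UNIV"
    by (rule summable_on_comparison_test[OF smn]) (auto simp: fu_def fv_def)
  have sv: "fv summable_on UNIV"
    by (rule summable_on_comparison_test[OF smn]) (auto simp: fu_def fv_def)
  have eq: "(cmod (U j (Suc n)))^2 + (cmod (V j (Suc n)))^2 = fu (j - 1) + fv (j + 1)" for j
  proof -
    have ns: "N_solution m a b \<tau> (U (j - 1) n, V (j + 1) n) (W j n)" and
      uv: "U j (Suc n) = fst (W j n \<tau>)" "V j (Suc n) = snd (W j n \<tau>)"
      using sch unfolding splitting_scheme_def by auto
    show ?thesis using conservation[OF ns, of \<tau>] tau uv by (simp add: fu_def fv_def)
  qed
  have b1: "bij_betw (\<lambda>j::int. j - 1) UNIV UNIV"
    by (rule bij_betwI[where g="\<lambda>j. j + 1"]) auto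
  have b2: "bij_betw (\<lambda>j::int. j + 1) UNIV UNIV"
    by (rule bij_betwI[where g="\<lambda>j. j - 1"]) auto
  have su': "(\<lambda>j. fu (j - 1)) summable_on UNIV" using summable_on_reindex_bij_betw[OF b1] su by blast
  have sv': "(\<lambda>j. fv (j + 1)) summable_on UNIV" using summable_on_reindex_bij_betw[OF b2] sv by blast
  have "(\<lambda>j. fu (j - 1) + fv (j + 1)) summable_on UNIV" using summable_on_add[OF su' sv'] .
  moreover have "infsum (\<lambda>j. fu (j - 1) + fv (j + 1)) UNIV = infsum fu UNIV + infsum fv UNIV"
    using infsum_add[OF su' sv'] infsum_reindex_bij_betw[OF b1, of fu] infsum_reindex_bij_betw[OF b2, of fv]
    by simp
  moreover have "infsum (\<lambda>j. fu j + fv j) UNIV = infsum fu UNIV + infsum fv UNIV"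
    using infsum_add[OF su sv] .
  ultimately show ?case using Suc.IH eq unfolding fu_def fv_def by simp
qed

lemma mass_point:
  assumes sch: "splitting_scheme m a b \<tau> U V W" and tau: "0 < \<tau>"
    and sm: "(\<lambda>j. (cmod (U j 0))^2 + (cmod (V j 0))^2) summable_on UNIV"
  shows "(cmod (U j n))^2 + (cmod (V k n))^2 \<le> infsum (\<lambda>j. (cmod (U j 0))^2 + (cmod (V j 0))^2) UNIV"
proof -
  note M = mass[OF sch tau sm, of n]
  define fu where "fu j = (cmod (U j n))^2" for j
  define fv where "fv j = (cmod (V j n))^2" for j
  have smn: "(\<lambda>j. fu j + fv j) summable_on UNIV" using M by (simp add: fu_def fv_def)
  have su: "fu summable_on UNIV"
    by (rule summable_on_comparison_test[OF smn]) (auto simp: fu_def fv_def)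
  have sv: "fv summable_on UNIV"
    by (rule summable_on_comparison_test[OF smn]) (auto simp: fu_def fv_def)
  have "fu j \<le> infsum fu UNIV" by (rule single_le_infsum[OF su]) (simp add: fu_def)
  moreover have "fv k \<le> infsum fv UNIV" by (rule single_le_infsum[OF sv]) (simp add: fv_def)
  moreover have "infsum (\<lambda>j. fu j + fv j) UNIV = infsum fu UNIV + infsum fv UNIV"
    using infsum_add[OF su sv] .
  ultimately show ?thesis using M unfolding fu_def fv_def by simp
qed

lemma sq4: "((a::real) + b + c + d)^2 \<le> 4 * (a^2 + b^2 + c^2 + d^2)"
proof -
  have "4 * (a^2 + b^2 + c^2 + d^2) - (a + b + c + d)^2 = (a-b)^2 + (a-c)^2 + (a-d)^2 + (b-c)^2 + (b-d)^2 + (c-d)^2"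
    by (simp add: power2_eq_square algebra_simps)
  moreover have "0 \<le> (a-b)^2 + (a-c)^2 + (a-d)^2 + (b-c)^2 + (b-d)^2 + (c-d)^2" by simp
  ultimately show ?thesis by linarith
qed

lemma amgm_tau:
  fixes S Z \<tau> :: real assumes "0 < \<tau>"
  shows "2 * Z * S \<le> S^2 / (4*\<tau>) + 4 * \<tau> * Z^2"
proof -
  have "0 \<le> (S - 4*\<tau>*Z)^2" by simp
  then have "8*\<tau>*Z*S \<le> S^2 + 16*\<tau>^2*Z^2" by (simp add: power2_eq_square algebra_simps)
  then have "(8*\<tau>*Z*S) / (4*\<tau>) \<le> (S^2 + 16*\<tau>^2*Z^2) / (4*\<tau>)"
    using assms by (intro divide_right_mono) auto
  moreover have "(8*\<tau>*Z*S) / (4*\<tau>) = 2 * Z * S" using assms by simp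
  moreover have "(S^2 + 16*\<tau>^2*Z^2) / (4*\<tau>) = S^2 / (4*\<tau>) + 4 * \<tau> * Z^2"
    using assms by (simp add: field_simps power2_eq_square)
  ultimately show ?thesis by simp
qed

lemma Re_cnj_le: "Re (cnj x * y) \<le> cmod x * cmod y"
  by (metis complex_Re_le_cmod complex_mod_cnj norm_mult)

lemma energy_core:
  fixes A B u v A' B' u' v' :: "real \<Rightarrow> complex" and K H \<delta> \<tau> :: real
  assumes tau: "0 < \<tau>"
    and dA: "\<And>s. s \<in> {0..\<tau>} \<Longrightarrow> (A has_vector_derivative A' s) (at s within {0..\<tau>})"
    and dB: "\<And>s. s \<in> {0..\<tau>} \<Longrightarrow> (B has_vector_derivative B' s) (at s within {0..\<tau>})"
    and du: "\<And>s. s \<in> {0..\<tau>} \<Longrightarrow> (u has_vector_derivative u' s) (at s within {0..\<tau>})"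
    and dv: "\<And>s. s \<in> {0..\<tau>} \<Longrightarrow> (v has_vector_derivative v' s) (at s within {0..\<tau>})"
    and b1: "\<And>s. s \<in> {0..\<tau>} \<Longrightarrow> cmod (A' s) \<le> K * (H^2 * (cmod (A s) + cmod (B s) + cmod (A s) * cmod (v s) + cmod (B s) * cmod (u s)) + H^3 * \<delta>)"
    and b2: "\<And>s. s \<in> {0..\<tau>} \<Longrightarrow> cmod (B' s) \<le> K * (H^2 * (cmod (A s) + cmod (B s) + cmod (A s) * cmod (v s) + cmod (B s) * cmod (u s)) + H^3 * \<delta>)"
    and b3: "\<And>s. s \<in> {0..\<tau>} \<Longrightarrow> cmod (A s * v' s + A' s * v s) \<le> K * (H^2 * (cmod (A s) + cmod (B s) + cmod (A s) * cmod (v s) + cmod (B s) * cmod (u s)) + H^3 * \<delta>)"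
    and b4: "\<And>s. s \<in> {0..\<tau>} \<Longrightarrow> cmod (B s * u' s + B' s * u s) \<le> K * (H^2 * (cmod (A s) + cmod (B s) + cmod (A s) * cmod (v s) + cmod (B s) * cmod (u s)) + H^3 * \<delta>)"
    and K0: "0 \<le> K" and H0: "0 \<le> H" and d0: "0 \<le> \<delta>" and s: "s \<in> {0..\<tau>}"
  shows "(cmod (A s))^2 + (cmod (B s))^2 + (cmod (A s))^2 * (cmod (v s))^2 + (cmod (B s))^2 * (cmod (u s))^2
    \<le> exp ((8*K*H^2 + 1/\<tau>) * \<tau>) * ((cmod (A 0))^2 + (cmod (B 0))^2 + (cmod (A 0))^2 * (cmod (v 0))^2 + (cmod (B 0))^2 * (cmod (u 0))^2
        + 4*K^2*H^6*\<delta>^2*\<tau> * \<tau>)"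
proof -
  define E where "E s = (cmod (A s))^2 + (cmod (B s))^2 + (cmod (A s * v s))^2 + (cmod (B s * u s))^2" for s
  have Eeq: "E s = (cmod (A s))^2 + (cmod (B s))^2 + (cmod (A s))^2 * (cmod (v s))^2 + (cmod (B s))^2 * (cmod (u s))^2" for s
    unfolding E_def by (simp add: norm_mult power_mult_distrib)
  define E' where "E' s = 2 * Re (cnj (A s) * A' s) + 2 * Re (cnj (B s) * B' s)
     + 2 * Re (cnj (A s * v s) * (A s * v' s + A' s * v s)) + 2 * Re (cnj (B s * u s) * (B s * u' s + B' s * u s))" for s
  have D: "(E has_real_derivative E' s) (at s within {0..\<tau>})" if "s \<in> {0..\<tau>}" for s
  proof -
    have m1: "((\<lambda>s. A s * v s) has_vector_derivative (A s * v' s + A' s * v s)) (at s within {0..\<tau>})"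
      using has_vector_derivative_mult[OF dA[OF that] dv[OF that]] .
    have m2: "((\<lambda>s. B s * u s) has_vector_derivative (B s * u' s + B' s * u s)) (at s within {0..\<tau>})"
      using has_vector_derivative_mult[OF dB[OF that] du[OF that]] .
    show ?thesis unfolding E_def E'_def
      by (intro DERIV_add cmod2_deriv[OF dA[OF that]] cmod2_deriv[OF dB[OF that]] cmod2_deriv[OF m1] cmod2_deriv[OF m2])
  qed
  define \<kappa> where "\<kappa> = 8*K*H^2 + 1/\<tau>"
  define \<sigma> where "\<sigma> = 4*K^2*H^6*\<delta>^2*\<tau>"
  have Bd: "E' s \<le> \<kappa> * E s + \<sigma>" if "s \<in> {0..\<tau>}" for s
  proof -
    define S where "S = cmod (A s) + cmod (B s) + cmod (A s) * cmod (v s) + cmod (B s) * cmod (u s)"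
    define Y where "Y = K * (H^2 * S + H^3 * \<delta>)"
    have "E' s \<le> 2 * (cmod (A s) * Y) + 2 * (cmod (B s) * Y) + 2 * (cmod (A s * v s) * Y) + 2 * (cmod (B s * u s) * Y)"
    proof -
      have "Re (cnj (A s) * A' s) \<le> cmod (A s) * Y"
        using Re_cnj_le[of "A s" "A' s"] b1[OF that] by (smt (verit) S_def Y_def mult_left_mono norm_ge_zero)
      moreover have "Re (cnj (B s) * B' s) \<le> cmod (B s) * Y"
        using Re_cnj_le[of "B s" "B' s"] b2[OF that] by (smt (verit) S_def Y_def mult_left_mono norm_ge_zero)
      moreover have "Re (cnj (A s * v s) * (A s * v' s + A' s * v s)) \<le> cmod (A s * v s) * Y"
        using Re_cnj_le[of "A s * v s" "A s * v' s + A' s * v s"] b3[OF that] by (smt (verit) S_def Y_def mult_left_mono norm_ge_zero)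
      moreover have "Re (cnj (B s * u s) * (B s * u' s + B' s * u s)) \<le> cmod (B s * u s) * Y"
        using Re_cnj_le[of "B s * u s" "B s * u' s + B' s * u s"] b4[OF that] by (smt (verit) S_def Y_def mult_left_mono norm_ge_zero)
      ultimately show ?thesis unfolding E'_def by linarith
    qed
    also have "\<dots> = 2 * S * Y" unfolding S_def by (simp add: norm_mult algebra_simps)
    also have "\<dots> = 2*K*H^2 * S^2 + 2 * (K*H^3*\<delta>) * S" unfolding Y_def by (simp add: power2_eq_square algebra_simps)
    also have "\<dots> \<le> 2*K*H^2 * (4 * E s) + (S^2 / (4*\<tau>) + 4 * \<tau> * (K*H^3*\<delta>)^2)"
    proof -
      have "S^2 \<le> 4 * E s" using sq4[of "cmod (A s)" "cmod (B s)" "cmod (A s * v s)" "cmod (B s * u s)"]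
        unfolding S_def E_def by (simp add: norm_mult)
      then have "2*K*H^2 * S^2 \<le> 2*K*H^2 * (4 * E s)" using K0 H0 by (intro mult_left_mono) auto
      then show ?thesis using amgm_tau[OF tau, of "K*H^3*\<delta>" S] by linarith
    qed
    also have "\<dots> \<le> 2*K*H^2 * (4 * E s) + (4 * E s / (4*\<tau>) + 4 * \<tau> * (K*H^3*\<delta>)^2)"
    proof -
      have "S^2 \<le> 4 * E s" using sq4[of "cmod (A s)" "cmod (B s)" "cmod (A s * v s)" "cmod (B s * u s)"]
        unfolding S_def E_def by (simp add: norm_mult)
      then have "S^2 / (4*\<tau>) \<le> 4 * E s / (4*\<tau>)" using tau by (intro divide_right_mono) auto
      then show ?thesis by linarith
    qed
    also have "\<dots> = \<kappa> * E s + \<sigma>" unfolding \<kappa>_def \<sigma>_def using tau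
      by (simp add: field_simps power2_eq_square power3_eq_cube eval_nat_numeral)
    finally show ?thesis .
  qed
  have k0: "0 \<le> \<kappa>" unfolding \<kappa>_def using K0 H0 tau by simp
  have s0: "0 \<le> \<sigma>" unfolding \<sigma>_def using K0 H0 tau d0 by simp
  have E0: "0 \<le> E 0" unfolding E_def by simp
  from gronwall_lin[OF tau D Bd k0 s0 E0 s] show ?thesis
    unfolding Eeq \<kappa>_def \<sigma>_def .
qed

lemma lin_parts:
  fixes f :: "real \<times> real \<Rightarrow> complex"
  assumes "f differentiable (at p within S)"
  shows "frechet_derivative f (at p within S) (1, 1) = pdx f S p + pdt f S p"
    and "frechet_derivative f (at p within S) (-1, 1) = pdt f S p - pdx f S p"
proof -
  have l: "linear (frechet_derivative f (at p within S))"
    using assms frechet_derivative_works has_derivative_linear by blast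
  have e1: "(1::real, 1::real) = (1, 0) + (0, 1)" by simp
  have e2: "(-1::real, 1::real) = (0, 1) - (1, 0)" by simp
  show "frechet_derivative f (at p within S) (1, 1) = pdx f S p + pdt f S p"
    unfolding pdx_def pdt_def by (subst e1, rule linear_add[OF l])
  show "frechet_derivative f (at p within S) (-1, 1) = pdt f S p - pdx f S p"
    unfolding pdx_def pdt_def by (subst e2, rule linear_diff[OF l])
qed

lemma fixed_step:
  fixes uh vh :: "real \<times> real \<Rightarrow> complex" and w :: "real \<Rightarrow> complex \<times> complex"
  assumes m0: "0 \<le> m" and tau: "0 < \<tau>" and T: "real (n + 1) * \<tau> \<le> T"
    and Sd: "S = UNIV \<times> {0..T}"
    and du: "\<forall>p\<in>S. uh differentiable (at p within S)" and dvh: "\<forall>p\<in>S. vh differentiable (at p within S)"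
    and pde: "\<forall>p\<in>S. pdt uh S p + pdx uh S p = NF1 m a b (uh p) (vh p) \<and> pdt vh S p - pdx vh S p = NF2 m a b (uh p) (vh p)"
    and M0b: "\<forall>p\<in>S. cmod (uh p) \<le> M0 \<and> cmod (vh p) \<le> M0"
    and Mb: "\<forall>p\<in>S. cmod (pdx uh S p) \<le> M \<and> cmod (pdx vh S p) \<le> M"
    and M0p: "0 \<le> M0" and Mp: "0 \<le> M"
    and ns: "N_solution m a b \<tau> w0 w"
    and rho: "(cmod (fst w0))^2 + (cmod (snd w0))^2 = \<rho>"
    and s: "s \<in> {0..\<tau>}"
  defines "K \<equiv> 2 * (8 * (m + \<bar>a\<bar> + \<bar>b\<bar> + 1))" and "H \<equiv> (1 + M0) * (1 + sqrt \<rho>)"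
  shows "(let Uc = (\<lambda>s. uh (of_int j * \<tau> + s, real n * \<tau> + s) - fst (w s));
             Vc = (\<lambda>s. vh (of_int (j + 2) * \<tau> - s, real n * \<tau> + s) - snd (w s));
             L = (\<lambda>s. (cmod (Uc s))\<^sup>2 + (cmod (Vc s))\<^sup>2);
             D = (\<lambda>s. (cmod (Uc s))\<^sup>2 * (cmod (snd (w s)))\<^sup>2
                      + (cmod (Vc s))\<^sup>2 * (cmod (fst (w s)))\<^sup>2)
         in L s + D s \<le> exp ((8*K*H^2 + 1/\<tau>) * \<tau>) * (L 0 + D 0 + 4*K^2*H^6*(2*M*\<tau>)^2*\<tau> * \<tau>))"
proof -
  define u where "u s = fst (w s)" for s
  define v where "v s = snd (w s)" for s
  define g1 where "g1 s = (of_int j * \<tau> + s, real n * \<tau> + s)" for s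
  define g2 where "g2 s = (of_int (j + 2) * \<tau> - s, real n * \<tau> + s)" for s
  define P where "P s = uh (g1 s)" for s
  define Q where "Q s = vh (g1 s)" for s
  define P2 where "P2 s = uh (g2 s)" for s
  define Q2 where "Q2 s = vh (g2 s)" for s
  define A where "A s = P s - u s" for s
  define B where "B s = Q2 s - v s" for s
  define \<delta> where "\<delta> = 2 * M * \<tau>"
  define r where "r = sqrt \<rho>"
  have gS: "g1 ` {0..\<tau>} \<subseteq> S" "g2 ` {0..\<tau>} \<subseteq> S"
  proof -
    have "real n * \<tau> + t \<le> T" if "t \<in> {0..\<tau>}" for t using T that by (auto simp: algebra_simps)
    then show "g1 ` {0..\<tau>} \<subseteq> S" "g2 ` {0..\<tau>} \<subseteq> S" unfolding Sd g1_def g2_def using tau by auto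
  qed
  have wD: "(w has_vector_derivative NF m a b (w t)) (at t within {0..\<tau>})" if "t \<in> {0..\<tau>}" for t
    using ns that unfolding N_solution_def by auto
  have uD: "(u has_vector_derivative NF1 m a b (u t) (v t)) (at t within {0..\<tau>})" if "t \<in> {0..\<tau>}" for t
    using bounded_linear.has_vector_derivative[OF bounded_linear_fst wD[OF that]] unfolding u_def v_def
    by (simp add: NF_def)
  have vD: "(v has_vector_derivative NF2 m a b (u t) (v t)) (at t within {0..\<tau>})" if "t \<in> {0..\<tau>}" for t
    using bounded_linear.has_vector_derivative[OF bounded_linear_snd wD[OF that]] unfolding u_def v_def
    by (simp add: NF_def)
  have PD: "(P has_vector_derivative NF1 m a b (P t) (Q t)) (at t within {0..\<tau>})" if "t \<in> {0..\<tau>}" for t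
  proof -
    have g: "(g1 has_vector_derivative (1, 1)) (at t within {0..\<tau>})" unfolding g1_def
      by (auto intro!: derivative_eq_intros)
    have inS: "g1 t \<in> S" using gS that by auto
    from chain_curve[OF du[rule_format, OF inS] g gS(1)] lin_parts(1)[OF du[rule_format, OF inS]] pde inS
    show ?thesis unfolding P_def Q_def by (simp add: add.commute)
  qed
  have Q2D: "(Q2 has_vector_derivative NF2 m a b (P2 t) (Q2 t)) (at t within {0..\<tau>})" if "t \<in> {0..\<tau>}" for t
  proof -
    have g: "(g2 has_vector_derivative (-1, 1)) (at t within {0..\<tau>})" unfolding g2_def
      by (auto intro!: derivative_eq_intros)
    have inS: "g2 t \<in> S" using gS that by auto
    from chain_curve[OF dvh[rule_format, OF inS] g gS(2)] lin_parts(2)[OF dvh[rule_format, OF inS]] pde inS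
    show ?thesis unfolding P2_def Q2_def by simp
  qed
  have cons: "(cmod (u t))^2 + (cmod (v t))^2 = \<rho>" if "t \<in> {0..\<tau>}" for t
    using conservation[OF ns that] rho unfolding u_def v_def by simp
  have uvr: "cmod (u t) \<le> r" "cmod (v t) \<le> r" if "t \<in> {0..\<tau>}" for t
  proof -
    have "(cmod (u t))^2 \<le> \<rho>" "(cmod (v t))^2 \<le> \<rho>" using cons[OF that] by (smt (verit) zero_le_power2)+
    then show "cmod (u t) \<le> r" "cmod (v t) \<le> r" unfolding r_def by (simp_all add: real_le_rsqrt)
  qed
  have bnds: "cmod (P t) \<le> M0" "cmod (Q t) \<le> M0" "cmod (P2 t) \<le> M0" "cmod (Q2 t) \<le> M0" if "t \<in> {0..\<tau>}" for t
  proof -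
    have "g1 t \<in> S" "g2 t \<in> S" using gS that by auto
    then show "cmod (P t) \<le> M0" "cmod (Q t) \<le> M0" "cmod (P2 t) \<le> M0" "cmod (Q2 t) \<le> M0"
      using M0b unfolding P_def Q_def P2_def Q2_def by auto
  qed
  have dlt: "cmod (Q t - Q2 t) \<le> \<delta>" "cmod (P2 t - P t) \<le> \<delta>" if "t \<in> {0..\<tau>}" for t
  proof -
    have "g1 t \<in> S" using gS that by auto
    then have tt: "real n * \<tau> + t \<in> {0..T}" unfolding g1_def Sd by auto
    have xy: "M * \<bar>(of_int j * \<tau> + t) - (of_int (j + 2) * \<tau> - t)\<bar> \<le> \<delta>"
    proof -
      have "\<bar>(of_int j * \<tau> + t) - (of_int (j + 2) * \<tau> - t)\<bar> = \<bar>2 * t - 2 * \<tau>\<bar>" by (simp add: algebra_simps)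
      also have "\<dots> \<le> 2 * \<tau>" using that tau by auto
      finally have "M * \<bar>(of_int j * \<tau> + t) - (of_int (j + 2) * \<tau> - t)\<bar> \<le> M * (2 * \<tau>)"
        by (rule mult_left_mono[OF _ Mp])
      then show ?thesis unfolding \<delta>_def by (simp add: mult.assoc mult.left_commute)
    qed
    have mv: "\<forall>p\<in>S. cmod (pdx vh S p) \<le> M" "\<forall>p\<in>S. cmod (pdx uh S p) \<le> M" using Mb by auto
    have "cmod (vh (of_int j * \<tau> + t, real n * \<tau> + t) - vh (of_int (j + 2) * \<tau> - t, real n * \<tau> + t)) \<le> \<delta>"
      using MVT_x[OF dvh Sd mv(1) tt] xy by (meson order_trans)
    then show "cmod (Q t - Q2 t) \<le> \<delta>" unfolding Q_def Q2_def g1_def g2_def .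
    have "cmod (uh (of_int j * \<tau> + t, real n * \<tau> + t) - uh (of_int (j + 2) * \<tau> - t, real n * \<tau> + t)) \<le> \<delta>"
      using MVT_x[OF du Sd mv(2) tt] xy by (meson order_trans)
    then show "cmod (P2 t - P t) \<le> \<delta>" unfolding P_def P2_def g1_def g2_def by (simp add: norm_minus_commute)
  qed
  define K0 where "K0 = 8 * (m + \<bar>a\<bar> + \<bar>b\<bar> + 1)"
  define Sv where "Sv t = cmod (A t) + cmod (B t) + cmod (A t) * cmod (v t) + cmod (B t) * cmod (u t)" for t
  have HH: "H = (1 + M0) * (1 + r)" unfolding H_def r_def ..
  have rho0: "0 \<le> \<rho>" using rho by (metis add_nonneg_nonneg zero_le_power2)
  have H0: "0 \<le> H" unfolding HH r_def using M0p rho0 by simp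
  have K0p: "0 \<le> K0" unfolding K0_def using m0 by simp
  have KK: "K = 2 * K0" unfolding K_def K0_def ..
  have d0: "0 \<le> \<delta>" unfolding \<delta>_def using Mp tau by simp
  have Sv0: "0 \<le> Sv t" for t unfolding Sv_def by simp
  have H3d: "H^3 * cmod d \<le> H^3 * \<delta> \<Longrightarrow> K0 * (H^2 * Sv t + H^3 * cmod d) \<le> K * (H^2 * Sv t + H^3 * \<delta>)" for d t
  proof -
    assume h: "H^3 * cmod d \<le> H^3 * \<delta>"
    have "K0 * (H^2 * Sv t + H^3 * cmod d) \<le> K0 * (H^2 * Sv t + H^3 * \<delta>)" using h K0p by (simp add: mult_left_mono)
    also have "\<dots> \<le> K * (H^2 * Sv t + H^3 * \<delta>)" unfolding KK using K0p H0 Sv0[of t] d0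
      by (intro mult_right_mono) auto
    finally show ?thesis .
  qed
  have H3: "H^3 * cmod d \<le> H^3 * \<delta>" if "cmod d \<le> \<delta>" for d using that H0 by (simp add: mult_left_mono)
  have B1: "cmod (NF1 m a b (P t) (Q t) - NF1 m a b (u t) (v t)) \<le> K0 * (H^2 * Sv t + H^3 * cmod (Q t - Q2 t))"
    "cmod ((NF1 m a b (P t) (Q t) - NF1 m a b (u t) (v t)) * v t) \<le> K0 * (H^2 * Sv t + H^3 * cmod (Q t - Q2 t))"
    "cmod (A t * NF2 m a b (u t) (v t)) \<le> K0 * (H^2 * Sv t)"
    if "t \<in> {0..\<tau>}" for t
    using NF_bounds2[OF m0 bnds(1,2)[OF that] uvr[OF that], of "A t" "B t" "Q t - Q2 t" "Sv t" H K0 a b]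
    unfolding A_def B_def Sv_def HH K0_def by auto
  have B2: "cmod (NF1 m a b (Q2 t) (P2 t) - NF1 m a b (v t) (u t)) \<le> K0 * (H^2 * Sv t + H^3 * cmod (P2 t - P t))"
    "cmod ((NF1 m a b (Q2 t) (P2 t) - NF1 m a b (v t) (u t)) * u t) \<le> K0 * (H^2 * Sv t + H^3 * cmod (P2 t - P t))"
    "cmod (B t * NF2 m a b (v t) (u t)) \<le> K0 * (H^2 * Sv t)"
    if "t \<in> {0..\<tau>}" for t
  proof -
    have e: "cmod (B t) + cmod (A t) + cmod (B t) * cmod (u t) + cmod (A t) * cmod (v t) = Sv t"
      unfolding Sv_def by simp
    show "cmod (NF1 m a b (Q2 t) (P2 t) - NF1 m a b (v t) (u t)) \<le> K0 * (H^2 * Sv t + H^3 * cmod (P2 t - P t))"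
    "cmod ((NF1 m a b (Q2 t) (P2 t) - NF1 m a b (v t) (u t)) * u t) \<le> K0 * (H^2 * Sv t + H^3 * cmod (P2 t - P t))"
    "cmod (B t * NF2 m a b (v t) (u t)) \<le> K0 * (H^2 * Sv t)"
      using NF_bounds2[OF m0 bnds(4,3)[OF that] uvr(2,1)[OF that], of "B t" "A t" "P2 t - P t" "Sv t" H K0 a b]
      unfolding A_def B_def HH K0_def e[symmetric] by auto
  qed
  have dA: "(A has_vector_derivative (NF1 m a b (P t) (Q t) - NF1 m a b (u t) (v t))) (at t within {0..\<tau>})"
    if "t \<in> {0..\<tau>}" for t
    using has_vector_derivative_diff[OF PD[OF that] uD[OF that]] unfolding A_def[abs_def] .
  have dB: "(B has_vector_derivative (NF2 m a b (P2 t) (Q2 t) - NF2 m a b (u t) (v t))) (at t within {0..\<tau>})"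
    if "t \<in> {0..\<tau>}" for t
    using has_vector_derivative_diff[OF Q2D[OF that] vD[OF that]] unfolding B_def[abs_def] .
  have b1: "cmod (NF1 m a b (P t) (Q t) - NF1 m a b (u t) (v t)) \<le> K * (H^2 * Sv t + H^3 * \<delta>)"
    if "t \<in> {0..\<tau>}" for t
    using B1(1)[OF that] H3d[OF H3[OF dlt(1)[OF that]], of t] by linarith
  have b2: "cmod (NF2 m a b (P2 t) (Q2 t) - NF2 m a b (u t) (v t)) \<le> K * (H^2 * Sv t + H^3 * \<delta>)"
    if "t \<in> {0..\<tau>}" for t
    using B2(1)[OF that] H3d[OF H3[OF dlt(2)[OF that]], of t] unfolding NF2_sym by linarith
  have b3: "cmod (A t * NF2 m a b (u t) (v t) + (NF1 m a b (P t) (Q t) - NF1 m a b (u t) (v t)) * v t)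
      \<le> K * (H^2 * Sv t + H^3 * \<delta>)" if "t \<in> {0..\<tau>}" for t
  proof -
    have "cmod (A t * NF2 m a b (u t) (v t) + (NF1 m a b (P t) (Q t) - NF1 m a b (u t) (v t)) * v t)
       \<le> K0 * (H^2 * Sv t) + K0 * (H^2 * Sv t + H^3 * \<delta>)"
      using norm_triangle_ineq[of "A t * NF2 m a b (u t) (v t)" "(NF1 m a b (P t) (Q t) - NF1 m a b (u t) (v t)) * v t"]
        B1(2,3)[OF that] H3[OF dlt(1)[OF that]] K0p by (smt (verit) mult_left_mono)
    also have "\<dots> \<le> K * (H^2 * Sv t + H^3 * \<delta>)" unfolding KK using K0p H0 d0 Sv0[of t]
      by (simp add: algebra_simps mult_nonneg_nonneg)
    finally show ?thesis .
  qed
  have b4: "cmod (B t * NF1 m a b (u t) (v t) + (NF2 m a b (P2 t) (Q2 t) - NF2 m a b (u t) (v t)) * u t)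
      \<le> K * (H^2 * Sv t + H^3 * \<delta>)" if "t \<in> {0..\<tau>}" for t
  proof -
    have "cmod (B t * NF1 m a b (u t) (v t) + (NF2 m a b (P2 t) (Q2 t) - NF2 m a b (u t) (v t)) * u t)
       \<le> K0 * (H^2 * Sv t) + K0 * (H^2 * Sv t + H^3 * \<delta>)"
      using norm_triangle_ineq[of "B t * NF1 m a b (u t) (v t)" "(NF2 m a b (P2 t) (Q2 t) - NF2 m a b (u t) (v t)) * u t"]
        B2(2,3)[OF that] H3[OF dlt(2)[OF that]] K0p unfolding NF2_sym by (smt (verit) mult_left_mono)
    also have "\<dots> \<le> K * (H^2 * Sv t + H^3 * \<delta>)" unfolding KK using K0p H0 d0 Sv0[of t]
      by (simp add: algebra_simps mult_nonneg_nonneg)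
    finally show ?thesis .
  qed
  have K0': "0 \<le> K" unfolding KK using K0p by simp
  note EC = energy_core[where A=A and B=B and u=u and v=v
     and A'="\<lambda>t. NF1 m a b (P t) (Q t) - NF1 m a b (u t) (v t)"
     and B'="\<lambda>t. NF2 m a b (P2 t) (Q2 t) - NF2 m a b (u t) (v t)"
     and u'="\<lambda>t. NF1 m a b (u t) (v t)" and v'="\<lambda>t. NF2 m a b (u t) (v t)" and K=K and H=H and \<delta>=\<delta>,
     OF tau dA dB uD vD b1[unfolded Sv_def] b2[unfolded Sv_def] b3[unfolded Sv_def] b4[unfolded Sv_def] K0' H0 d0 s]
  show ?thesis unfolding Let_def using EC unfolding A_def B_def P_def Q2_def g1_def g2_def u_def v_def \<delta>_def
    by (simp add: add.assoc)
qed

lemma final_bound: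
  fixes K M0 M \<tau> \<rho> c0 E0 H :: real
  assumes K0: "0 \<le> K" and M0: "0 \<le> M0" and tau: "0 < \<tau>" "\<tau> < 1" and rho0: "0 \<le> \<rho>"
    and rt: "\<rho> * \<tau> \<le> c0" and E0: "0 \<le> E0" and He: "H = (1 + M0) * (1 + sqrt \<rho>)"
  shows "exp ((8*K*H^2 + 1/\<tau>) * \<tau>) * (E0 + 4*K^2*H^6*(2*M*\<tau>)^2*\<tau> * \<tau>)
     \<le> exp (16*K*(1+M0)^2*(1+c0) + 1) * E0 + exp (16*K*(1+M0)^2*(1+c0) + 1) * (128*K^2*(1+M0)^6*(1+c0)^3) * M^2 * \<tau>"
proof -
  define L where "L = 16*K*(1+M0)^2*(1+c0) + 1"
  have sq: "(1 + sqrt \<rho>)^2 \<le> 2 * (1 + \<rho>)"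
  proof -
    have "0 \<le> (1 - sqrt \<rho>)^2" by simp
    moreover have "(sqrt \<rho>)^2 = \<rho>" using rho0 by simp
    ultimately show ?thesis by (simp add: power2_eq_square algebra_simps)
  qed
  have H2: "H^2 \<le> 2 * (1+M0)^2 * (1 + \<rho>)"
  proof -
    have "H^2 = (1+M0)^2 * (1 + sqrt \<rho>)^2" unfolding He by (simp add: power_mult_distrib)
    also have "\<dots> \<le> (1+M0)^2 * (2 * (1 + \<rho>))" using sq by (intro mult_left_mono) auto
    finally show ?thesis by (simp add: algebra_simps)
  qed
  have rt1: "(1 + \<rho>) * \<tau> \<le> 1 + c0" using rt tau by (simp add: algebra_simps)
  have rt0: "0 \<le> (1 + \<rho>) * \<tau>" using rho0 tau by simp
  have c00: "0 \<le> c0" using rt rho0 tau by (smt (verit) mult_nonneg_nonneg)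
  have e1: "(8*K*H^2 + 1/\<tau>) * \<tau> \<le> L"
  proof -
    have a: "(8*K*H^2 + 1/\<tau>) * \<tau> = 8*K*(H^2*\<tau>) + 1" using tau by (simp add: field_simps)
    have "H^2*\<tau> \<le> 2 * (1+M0)^2 * ((1 + \<rho>) * \<tau>)" using H2 tau by (simp add: mult_right_mono mult.assoc)
    also have "\<dots> \<le> 2 * (1+M0)^2 * (1 + c0)" using rt1 by (intro mult_left_mono) auto
    finally have "8*K*(H^2*\<tau>) \<le> 8*K*(2 * (1+M0)^2 * (1 + c0))" using K0 by (intro mult_left_mono) auto
    then show ?thesis unfolding a L_def by (simp add: algebra_simps)
  qed
  have e2: "4*K^2*H^6*(2*M*\<tau>)^2*\<tau> * \<tau> \<le> (128*K^2*(1+M0)^6*(1+c0)^3) * M^2 * \<tau>"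
  proof -
    have a: "4*K^2*H^6*(2*M*\<tau>)^2*\<tau> * \<tau> = 16*K^2*M^2*\<tau>^4 * (H^2)^3"
      by (simp add: power2_eq_square eval_nat_numeral algebra_simps)
    have "(H^2)^3 \<le> (2 * (1+M0)^2 * (1 + \<rho>))^3" using H2 by (intro power_mono) auto
    then have b: "16*K^2*M^2*\<tau>^4 * (H^2)^3 \<le> 16*K^2*M^2*\<tau>^4 * (2 * (1+M0)^2 * (1 + \<rho>))^3"
      by (intro mult_left_mono) auto
    have c: "16*K^2*M^2*\<tau>^4 * (2 * (1+M0)^2 * (1 + \<rho>))^3 = (128*K^2*(1+M0)^6) * M^2 * \<tau> * ((1 + \<rho>) * \<tau>)^3"
      by (simp add: power_mult_distrib eval_nat_numeral algebra_simps)
    have "((1 + \<rho>) * \<tau>)^3 \<le> (1 + c0)^3" using rt1 rt0 by (intro power_mono) auto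
    then have d: "(128*K^2*(1+M0)^6) * M^2 * \<tau> * ((1 + \<rho>) * \<tau>)^3 \<le> (128*K^2*(1+M0)^6) * M^2 * \<tau> * (1 + c0)^3"
      using tau by (intro mult_left_mono) auto
    have e: "(128*K^2*(1+M0)^6) * M^2 * \<tau> * (1 + c0)^3 = (128*K^2*(1+M0)^6*(1+c0)^3) * M^2 * \<tau>"
      by (simp add: algebra_simps)
    show ?thesis using a b c d e by linarith
  qed
  have "exp ((8*K*H^2 + 1/\<tau>) * \<tau>) * (E0 + 4*K^2*H^6*(2*M*\<tau>)^2*\<tau> * \<tau>)
     \<le> exp L * (E0 + (128*K^2*(1+M0)^6*(1+c0)^3) * M^2 * \<tau>)"
    using e1 e2 E0 tau by (intro mult_mono) (auto simp: mult_nonneg_nonneg)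
  then show ?thesis unfolding L_def by (simp add: algebra_simps)
qed
theorem lemma4p3:
  fixes m \<alpha> \<beta> c0 M0 M :: real
  assumes "m \<ge> 0" and "c0 > 0"
  shows "\<exists>C2 C3. C2 > 0 \<and> C3 > 0 \<and>
    (\<forall>T (uh :: real \<times> real \<Rightarrow> complex) (vh :: real \<times> real \<Rightarrow> complex).
       T > 0 \<and> NLDE_smooth_solution m \<alpha> \<beta> T uh vh
       \<and> bdd_above ((\<lambda>p. cmod (uh p) + cmod (vh p) + 1) ` (UNIV \<times> {0..T}))
       \<and> M0 = (SUP p\<in>UNIV \<times> {0..T}. cmod (uh p) + cmod (vh p) + 1)
       \<and> bdd_above ((\<lambda>p. let S = UNIV \<times> {0..T} in
              cmod (pdt uh S p) + cmod (pdx uh S p) + cmod (pdt vh S p) + cmod (pdx vh S p) + 1)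
            ` (UNIV \<times> {0..T}))
       \<and> M = (SUP p\<in>UNIV \<times> {0..T}. let S = UNIV \<times> {0..T} in
              cmod (pdt uh S p) + cmod (pdx uh S p) + cmod (pdt vh S p) + cmod (pdx vh S p) + 1)
     \<longrightarrow>
     (\<forall>\<tau> U V W. 0 < \<tau> \<and> \<tau> < 1 \<and> splitting_scheme m \<alpha> \<beta> \<tau> U V W
        \<and> (\<lambda>j. (cmod (U j 0))\<^sup>2 + (cmod (V j 0))\<^sup>2) summable_on UNIV
        \<and> (\<Sum>\<^sub>\<infinity>j. (cmod (U j 0))\<^sup>2 + (cmod (V j 0))\<^sup>2) * \<tau> \<le> c0
      \<longrightarrow>
      (\<forall>(j::int) (n::nat) s. real (n + 1) * \<tau> \<le> T \<and> 0 \<le> s \<and> s \<le> \<tau> \<longrightarrow>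
        (let Uc = (\<lambda>s. uh (of_int j * \<tau> + s, real n * \<tau> + s) - fst (W (j + 1) n s));
             Vc = (\<lambda>s. vh (of_int (j + 2) * \<tau> - s, real n * \<tau> + s) - snd (W (j + 1) n s));
             L = (\<lambda>s. (cmod (Uc s))\<^sup>2 + (cmod (Vc s))\<^sup>2);
             D = (\<lambda>s. (cmod (Uc s))\<^sup>2 * (cmod (snd (W (j + 1) n s)))\<^sup>2
                      + (cmod (Vc s))\<^sup>2 * (cmod (fst (W (j + 1) n s)))\<^sup>2)
         in L s + D s \<le> C2 * (L 0 + D 0) + C3 * M\<^sup>2 * \<tau>))))"
proof -
  define K where "K = 2 * (8 * (m + \<bar>\<alpha>\<bar> + \<bar>\<beta>\<bar> + 1))"
  define Lam where "Lam = 16*K*(1+\<bar>M0\<bar>)^2*(1+c0) + 1"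
  define C2 where "C2 = exp Lam"
  define C3 where "C3 = exp Lam * (128*K^2*(1+\<bar>M0\<bar>)^6*(1+c0)^3)"
  have K0: "0 \<le> K" unfolding K_def using assms by simp
  have Kp: "0 < K" unfolding K_def using assms by simp
  have C2p: "C2 > 0" unfolding C2_def by simp
  have C3p: "C3 > 0" unfolding C3_def using Kp assms by simp
  show ?thesis
  proof (rule exI[of _ C2], rule exI[of _ C3], intro conjI C2p C3p allI impI)
    fix T and uh vh :: "real \<times> real \<Rightarrow> complex"
    assume H: "T > 0 \<and> NLDE_smooth_solution m \<alpha> \<beta> T uh vh
       \<and> bdd_above ((\<lambda>p. cmod (uh p) + cmod (vh p) + 1) ` (UNIV \<times> {0..T}))
       \<and> M0 = (SUP p\<in>UNIV \<times> {0..T}. cmod (uh p) + cmod (vh p) + 1)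
       \<and> bdd_above ((\<lambda>p. let S = UNIV \<times> {0..T} in
              cmod (pdt uh S p) + cmod (pdx uh S p) + cmod (pdt vh S p) + cmod (pdx vh S p) + 1)
            ` (UNIV \<times> {0..T}))
       \<and> M = (SUP p\<in>UNIV \<times> {0..T}. let S = UNIV \<times> {0..T} in
              cmod (pdt uh S p) + cmod (pdx uh S p) + cmod (pdt vh S p) + cmod (pdx vh S p) + 1)"
    define S where "S = (UNIV :: real set) \<times> {0..T}"
    have Tp: "T > 0" using H by simp
    have sol: "smooth_on_set S uh" "smooth_on_set S vh"
      "\<forall>p\<in>S. pdt uh S p + pdx uh S p = NF1 m \<alpha> \<beta> (uh p) (vh p) \<and> pdt vh S p - pdx vh S p = NF2 m \<alpha> \<beta> (uh p) (vh p)"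
      using H unfolding NLDE_smooth_solution_def S_def Let_def by auto
    have du: "\<forall>p\<in>S. uh differentiable (at p within S)" using smooth_on_set.cases[OF sol(1)] by blast
    have dvh: "\<forall>p\<in>S. vh differentiable (at p within S)" using smooth_on_set.cases[OF sol(2)] by blast
    have M0u: "cmod (uh p) + cmod (vh p) + 1 \<le> M0" if "p \<in> S" for p
      using H that unfolding S_def by (metis (no_types, lifting) cSUP_upper)
    have Mu: "cmod (pdt uh S p) + cmod (pdx uh S p) + cmod (pdt vh S p) + cmod (pdx vh S p) + 1 \<le> M" if "p \<in> S" for p
    proof -
      have "(let S = UNIV \<times> {0..T} in
              cmod (pdt uh S p) + cmod (pdx uh S p) + cmod (pdt vh S p) + cmod (pdx vh S p) + 1) \<le> M"
        using H that unfolding S_def by (metis (no_types, lifting) cSUP_upper)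
      then show ?thesis unfolding S_def Let_def .
    qed
    have S00: "(0, 0) \<in> S" unfolding S_def using Tp by auto
    have M01: "1 \<le> M0" using M0u[OF S00] by (smt (verit) norm_ge_zero)
    have M1: "1 \<le> M" using Mu[OF S00] by (smt (verit) norm_ge_zero)
    have aM0: "\<bar>M0\<bar> = M0" using M01 by simp
    have M0b: "\<forall>p\<in>S. cmod (uh p) \<le> M0 \<and> cmod (vh p) \<le> M0"
      using M0u by (smt (verit) norm_ge_zero)
    have Mb: "\<forall>p\<in>S. cmod (pdx uh S p) \<le> M \<and> cmod (pdx vh S p) \<le> M"
      using Mu by (smt (verit) norm_ge_zero)
      fix \<tau> U V W j n s
      assume H2: "0 < \<tau> \<and> \<tau> < 1 \<and> splitting_scheme m \<alpha> \<beta> \<tau> U V W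
        \<and> (\<lambda>j. (cmod (U j 0))\<^sup>2 + (cmod (V j 0))\<^sup>2) summable_on UNIV
        \<and> (\<Sum>\<^sub>\<infinity>j. (cmod (U j 0))\<^sup>2 + (cmod (V j 0))\<^sup>2) * \<tau> \<le> c0"
      assume H3: "real (n + 1) * \<tau> \<le> T \<and> 0 \<le> s \<and> s \<le> \<tau>"
      have tau: "0 < \<tau>" "\<tau> < 1" using H2 by auto
      have sch: "splitting_scheme m \<alpha> \<beta> \<tau> U V W" using H2 by auto
      have ns: "N_solution m \<alpha> \<beta> \<tau> (U j n, V (j + 2) n) (W (j + 1) n)"
        using sch unfolding splitting_scheme_def by (metis add_diff_cancel_right' add.assoc one_add_one)
      define \<rho> where "\<rho> = (cmod (U j n))^2 + (cmod (V (j + 2) n))^2"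
      have rho0: "0 \<le> \<rho>" unfolding \<rho>_def by simp
      have rt: "\<rho> * \<tau> \<le> c0"
      proof -
        have "\<rho> \<le> (\<Sum>\<^sub>\<infinity>j. (cmod (U j 0))\<^sup>2 + (cmod (V j 0))\<^sup>2)"
          unfolding \<rho>_def using mass_point[OF sch tau(1)] H2 by blast
        then have "\<rho> * \<tau> \<le> (\<Sum>\<^sub>\<infinity>j. (cmod (U j 0))\<^sup>2 + (cmod (V j 0))\<^sup>2) * \<tau>"
          using tau by (intro mult_right_mono) auto
        then show ?thesis using H2 by linarith
      qed
      have s: "s \<in> {0..\<tau>}" using H3 by auto
      note FS = fixed_step[where j=j and n=n and \<rho>=\<rho> and T=T,
          OF assms(1) tau(1) _ S_def du dvh sol(3) M0b Mb _ _ ns _ s, unfolded Let_def]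
      have FS': "(cmod (uh (of_int j * \<tau> + s, real n * \<tau> + s) - fst (W (j + 1) n s)))\<^sup>2 +
          (cmod (vh (of_int (j + 2) * \<tau> - s, real n * \<tau> + s) - snd (W (j + 1) n s)))\<^sup>2 +
          ((cmod (uh (of_int j * \<tau> + s, real n * \<tau> + s) - fst (W (j + 1) n s)))\<^sup>2 * (cmod (snd (W (j + 1) n s)))\<^sup>2 +
           (cmod (vh (of_int (j + 2) * \<tau> - s, real n * \<tau> + s) - snd (W (j + 1) n s)))\<^sup>2 * (cmod (fst (W (j + 1) n s)))\<^sup>2)
        \<le> exp ((8 * K * ((1 + M0) * (1 + sqrt \<rho>))\<^sup>2 + 1 / \<tau>) * \<tau>) *
          ((cmod (uh (of_int j * \<tau> + 0, real n * \<tau> + 0) - fst (W (j + 1) n 0)))\<^sup>2 +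
           (cmod (vh (of_int (j + 2) * \<tau> - 0, real n * \<tau> + 0) - snd (W (j + 1) n 0)))\<^sup>2 +
           ((cmod (uh (of_int j * \<tau> + 0, real n * \<tau> + 0) - fst (W (j + 1) n 0)))\<^sup>2 * (cmod (snd (W (j + 1) n 0)))\<^sup>2 +
            (cmod (vh (of_int (j + 2) * \<tau> - 0, real n * \<tau> + 0) - snd (W (j + 1) n 0)))\<^sup>2 * (cmod (fst (W (j + 1) n 0)))\<^sup>2) +
           4 * K\<^sup>2 * ((1 + M0) * (1 + sqrt \<rho>)) ^ 6 * (2 * M * \<tau>)\<^sup>2 * \<tau> * \<tau>)"
        using FS H3 M01 M1 unfolding K_def \<rho>_def by simp
      show "let Uc = (\<lambda>s. uh (of_int j * \<tau> + s, real n * \<tau> + s) - fst (W (j + 1) n s));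
             Vc = (\<lambda>s. vh (of_int (j + 2) * \<tau> - s, real n * \<tau> + s) - snd (W (j + 1) n s));
             L = (\<lambda>s. (cmod (Uc s))\<^sup>2 + (cmod (Vc s))\<^sup>2);
             D = (\<lambda>s. (cmod (Uc s))\<^sup>2 * (cmod (snd (W (j + 1) n s)))\<^sup>2
                      + (cmod (Vc s))\<^sup>2 * (cmod (fst (W (j + 1) n s)))\<^sup>2)
         in L s + D s \<le> C2 * (L 0 + D 0) + C3 * M\<^sup>2 * \<tau>"
        unfolding Let_def
        using order_trans[OF FS' final_bound[OF K0 _ tau rho0 rt _ refl]] M01
        unfolding C2_def C3_def Lam_def aM0 by (simp add: algebra_simps)
  qed
qed

end
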